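(* Let $d\ge 2$ and let $\{\tau_e: e\in\mathcal E^d\}$ be i.i.d. non-negative edge weights on the nearest-neighbor edges $\mathcal E^d$ of $\mathbb Z^d$, satisfying the standing assumption described in the context. Fix $x\in\mathbb Z^d$ and let $\pi^{(x)}$ be the distinguished geodesic from $0$ to $x$. Then for any $t>0$ and any $e\in\mathcal E^d$, $$\mathbb P\big(\tau_e\le t \,\big|\, e\in \pi^{(x)}\big)\ \ge\ \mathbb P(\tau_e\le t).$$
   Context: Setting: $d\ge2$; $\mathcal E^d$ is the set of nearest-neighbor edges of $\mathbb Z^d$; $\{\tau_e\}$ are i.i.d. non-negative random variables with law $\mu$, distribution function $F$, and essential infimum $r$. Standing assumption: $F(r)<p_c(d)$ if $r=0$ and $F(r)<\vec p_c(d)$ if $r>0$, where $p_c(d)$ is the critical probability of Bernoulli bond percolation on $\mathbb Z^d$ and $\vec p_c(d)$ that of oriented bond percolation on $\mathbb Z^d$. The passage time of a path $\gamma$ is $T(\gamma)=\sum_{e\in\gamma}\tau_e$, and $T(x,y)=\inf T(\gamma)$ over vertex self-avoiding nearest-neighbor paths from $x$ to $y$. A geodesic from $x$ to $y$ is a vertex self-avoiding path $\gamma$ from $x$ to $y$ with $T(\gamma)=T(x,y)$. Fix an arbitrary deterministic ordering of all finite vertex self-avoiding lattice paths; $\pi^{(x)}$ denotes the first geodesic from $0$ to $x$ in this ordering. *)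

theory Defs
  imports "HOL-Probability.Probability"
begin

text \<open>Vertices of Z^d are integer vectors indexed by a finite type 'd, d = CARD('d).\<close>

definition unit_vec :: "'d::finite \<Rightarrow> int ^ 'd" where
  "unit_vec i = (\<chi> j. if j = i then 1 else 0)"

definition lattice_adj :: "int ^ 'd::finite \<Rightarrow> int ^ 'd \<Rightarrow> bool" where
  "lattice_adj x y \<longleftrightarrow> (\<exists>i. y = x + unit_vec i \<or> x = y + unit_vec i)"

definition lattice_edges :: "(int ^ 'd::finite) set set" where
  "lattice_edges = {{x, x + unit_vec i} | x i. True}"

definition sa_path :: "(int ^ 'd::finite) list \<Rightarrow> bool" where
  "sa_path vs \<longleftrightarrow> vs \<noteq> [] \<and> distinct vs \<and>
     (\<forall>k. Suc k < length vs \<longrightarrow> lattice_adj (vs ! k) (vs ! Suc k))"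

definition sa_path_from_to :: "int ^ 'd::finite \<Rightarrow> int ^ 'd \<Rightarrow> (int ^ 'd) list \<Rightarrow> bool" where
  "sa_path_from_to x y vs \<longleftrightarrow> sa_path vs \<and> hd vs = x \<and> last vs = y"

definition path_edges :: "'a list \<Rightarrow> 'a set list" where
  "path_edges vs = map (\<lambda>k. {vs ! k, vs ! Suc k}) [0..<length vs - 1]"

definition passage_time :: "('a set \<Rightarrow> real) \<Rightarrow> 'a list \<Rightarrow> real" where
  "passage_time w vs = sum_list (map w (path_edges vs))"

definition fpp_dist :: "((int ^ 'd::finite) set \<Rightarrow> real) \<Rightarrow> int ^ 'd \<Rightarrow> int ^ 'd \<Rightarrow> real" where
  "fpp_dist w x y = (INF vs \<in> {vs. sa_path_from_to x y vs}. passage_time w vs)"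

definition is_geodesic ::
  "((int ^ 'd::finite) set \<Rightarrow> real) \<Rightarrow> int ^ 'd \<Rightarrow> int ^ 'd \<Rightarrow> (int ^ 'd) list \<Rightarrow> bool" where
  "is_geodesic w x y vs \<longleftrightarrow> sa_path_from_to x y vs \<and> passage_time w vs = fpp_dist w x y"

text \<open>The deterministic ordering of all finite self-avoiding paths is an enumeration
  \<open>ord_rk\<close> (injective on self-avoiding paths).  The distinguished geodesic from 0 to x
  is the geodesic of least ord_rk; the predicate below says that it exists and
  contains the edge e.\<close>
definition edge_in_first_geodesic ::
  "((int ^ 'd::finite) list \<Rightarrow> nat) \<Rightarrow> ((int ^ 'd) set \<Rightarrow> real) \<Rightarrow> int ^ 'd \<Rightarrow> (int ^ 'd) set \<Rightarrow> bool" where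
  "edge_in_first_geodesic ord_rk w x e \<longleftrightarrow>
     (\<exists>g. is_geodesic w 0 x g \<and> (\<forall>g'. is_geodesic w 0 x g' \<longrightarrow> ord_rk g \<le> ord_rk g')
          \<and> e \<in> set (path_edges g))"

definition bond_perc_measure :: "real \<Rightarrow> ((int ^ 'd::finite) set \<Rightarrow> bool) measure" where
  "bond_perc_measure p = (\<Pi>\<^sub>M e \<in> lattice_edges. measure_pmf (bernoulli_pmf p))"

definition open_cluster :: "((int ^ 'd::finite) set \<Rightarrow> bool) \<Rightarrow> (int ^ 'd) set" where
  "open_cluster \<omega> = {y. \<exists>vs. sa_path_from_to 0 y vs \<and> (\<forall>e \<in> set (path_edges vs). \<omega> e)}"

definition oriented_cluster :: "((int ^ 'd::finite) set \<Rightarrow> bool) \<Rightarrow> (int ^ 'd) set" where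
  "oriented_cluster \<omega> = {y. \<exists>vs. vs \<noteq> [] \<and> hd vs = 0 \<and> last vs = y \<and>
      (\<forall>k. Suc k < length vs \<longrightarrow> (\<exists>i. vs ! Suc k = vs ! k + unit_vec i) \<and> \<omega> {vs ! k, vs ! Suc k})}"

definition p_c :: "'d::finite itself \<Rightarrow> real" where
  "p_c _ = Sup {p \<in> {0..1}. measure (bond_perc_measure p :: ((int ^ 'd) set \<Rightarrow> bool) measure)
                   {\<omega> \<in> space (bond_perc_measure p). infinite (open_cluster \<omega>)} = 0}"

definition vec_p_c :: "'d::finite itself \<Rightarrow> real" where
  "vec_p_c _ = Sup {p \<in> {0..1}. measure (bond_perc_measure p :: ((int ^ 'd) set \<Rightarrow> bool) measure)
                   {\<omega> \<in> space (bond_perc_measure p). infinite (oriented_cluster \<omega>)} = 0}"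

definition distr_fun :: "real measure \<Rightarrow> real \<Rightarrow> real" where
  "distr_fun \<mu> t = measure \<mu> {..t}"

definition ess_inf_law :: "real measure \<Rightarrow> real" where
  "ess_inf_law \<mu> = Sup {s. measure \<mu> {..<s} = 0}"

end

theory Submission
  imports Defs
begin

lemma adj_edge: "lattice_adj a b \<Longrightarrow> {a, b} \<in> lattice_edges"
  unfolding lattice_adj_def lattice_edges_def by (auto simp: insert_commute)

lemma path_edges_in: "sa_path vs \<Longrightarrow> f \<in> set (path_edges vs) \<Longrightarrow> f \<in> lattice_edges"
  unfolding path_edges_def sa_path_def by (auto intro: adj_edge)

lemma path_edges_distinct: "distinct vs \<Longrightarrow> distinct (path_edges vs)"
  unfolding path_edges_def
proof (subst distinct_map, intro conjI)
  assume d: "distinct vs"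
  show "inj_on (\<lambda>k. {vs ! k, vs ! Suc k}) (set [0..<length vs - 1])"
  proof (rule inj_onI)
    fix k j assume k: "k \<in> set [0..<length vs - 1]" and j: "j \<in> set [0..<length vs - 1]"
      and eq: "{vs ! k, vs ! Suc k} = {vs ! j, vs ! Suc j}"
    have kl: "k < length vs" "Suc k < length vs" "j < length vs" "Suc j < length vs" using k j by auto
    from eq have "(vs ! k = vs ! j \<and> vs ! Suc k = vs ! Suc j) \<or> (vs ! k = vs ! Suc j \<and> vs ! Suc k = vs ! j)"
      by (auto simp: doubleton_eq_iff)
    then show "k = j"
    proof
      assume "vs ! k = vs ! j \<and> vs ! Suc k = vs ! Suc j"
      then show ?thesis using d kl by (simp add: nth_eq_iff_index_eq)
    next
      assume h: "vs ! k = vs ! Suc j \<and> vs ! Suc k = vs ! j"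
      have 1: "k = Suc j" using d kl h nth_eq_iff_index_eq by metis
      have 2: "Suc k = j" using d kl h nth_eq_iff_index_eq by metis
      show ?thesis using 1 2 by linarith
    qed
  qed
qed simp

lemma count_distinct: "distinct xs \<Longrightarrow> count_list xs a = (if a \<in> set xs then 1 else 0)"
  by (induction xs) auto

lemma sum_upd: "sum_list (map (w(e:=s)) xs) = sum_list (map (w(e:=0)) xs) + s * real (count_list xs e)"
  by (induction xs) (auto simp: algebra_simps)

definition Qp :: "((int ^ 'd::finite) list \<Rightarrow> nat) \<Rightarrow> int ^ 'd \<Rightarrow> (int ^ 'd) set \<Rightarrow> ((int ^ 'd) set \<Rightarrow> real) \<Rightarrow> bool" where
  "Qp ord x e w \<longleftrightarrow> (\<exists>g\<in>{g. sa_path_from_to 0 x g}. e \<in> set (path_edges g) \<and>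
     (\<forall>g'\<in>{g. sa_path_from_to 0 x g}. passage_time w g \<le> passage_time w g') \<and>
     (\<forall>g'\<in>{g. sa_path_from_to 0 x g}. passage_time w g' = passage_time w g \<longrightarrow> ord g \<le> ord g'))"

lemma Qp_equiv:
  assumes nn: "\<forall>f\<in>lattice_edges. 0 \<le> w f"
  shows "edge_in_first_geodesic ord w x e \<longleftrightarrow> Qp ord x e w"
proof -
  let ?S = "passage_time w ` {g. sa_path_from_to 0 x g}"
  have bdd: "bdd_below ?S"
  proof
    fix y assume "y \<in> ?S"
    then obtain g where g: "sa_path_from_to 0 x g" "y = passage_time w g" by auto
    have "\<forall>f\<in>set (path_edges g). 0 \<le> w f" using g nn path_edges_in unfolding sa_path_from_to_def by blast
    then show "0 \<le> y" using g(2) unfolding passage_time_def by (auto intro!: sum_list_nonneg)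
  qed
  have geo: "is_geodesic w 0 x g \<longleftrightarrow> sa_path_from_to 0 x g \<and> (\<forall>g'. sa_path_from_to 0 x g' \<longrightarrow> passage_time w g \<le> passage_time w g')" for g
  proof
    assume a: "is_geodesic w 0 x g"
    then show "sa_path_from_to 0 x g \<and> (\<forall>g'. sa_path_from_to 0 x g' \<longrightarrow> passage_time w g \<le> passage_time w g')"
      unfolding is_geodesic_def fpp_dist_def using bdd by (auto intro: cInf_lower)
  next
    assume a: "sa_path_from_to 0 x g \<and> (\<forall>g'. sa_path_from_to 0 x g' \<longrightarrow> passage_time w g \<le> passage_time w g')"
    then have "Inf ?S = passage_time w g" by (intro cInf_eq_minimum) auto
    then show "is_geodesic w 0 x g" using a unfolding is_geodesic_def fpp_dist_def by simp
  qed
  show ?thesis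
    unfolding edge_in_first_geodesic_def Qp_def geo
    apply (rule iffI)
     apply (metis (mono_tags, lifting) mem_Collect_eq order.refl)
    by (metis (mono_tags, lifting) dual_order.antisym mem_Collect_eq)
qed

lemma Qp_mono:
  assumes le: "s' \<le> s" and Q: "Qp ord x e (w(e:=s))"
  shows "Qp ord x e (w(e:=s'))"
proof -
  let ?w0 = "w(e:=0)"
  have T: "passage_time (w(e:=r)) g = passage_time ?w0 g + r * real (count_list (path_edges g) e)" for r g
    unfolding passage_time_def by (rule sum_upd)
  have c: "sa_path_from_to 0 x g \<Longrightarrow> count_list (path_edges g) e = (if e \<in> set (path_edges g) then 1 else 0)" for g
    by (rule count_distinct, rule path_edges_distinct) (simp add: sa_path_from_to_def sa_path_def)
  from Q obtain g where g: "sa_path_from_to 0 x g" "e \<in> set (path_edges g)"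
    and m: "\<And>g'. sa_path_from_to 0 x g' \<Longrightarrow> passage_time (w(e:=s)) g \<le> passage_time (w(e:=s)) g'"
    and o: "\<And>g'. sa_path_from_to 0 x g' \<Longrightarrow> passage_time (w(e:=s)) g' = passage_time (w(e:=s)) g \<Longrightarrow> ord g \<le> ord g'"
    unfolding Qp_def by auto
  have cg: "count_list (path_edges g) e = 1" using c[OF g(1)] g(2) by simp
  show ?thesis unfolding Qp_def
  proof (rule bexI[of _ g], intro conjI ballI impI)
    fix g' assume g': "g' \<in> {g. sa_path_from_to 0 x g}"
    have c': "real (count_list (path_edges g') e) \<le> 1" "0 \<le> real (count_list (path_edges g') e)"
      using c[of g'] g' by auto
    have "passage_time ?w0 g + s \<le> passage_time ?w0 g' + s * real (count_list (path_edges g') e)"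
      using m[of g'] g' T[of s] cg by simp
    moreover have "(s - s') * real (count_list (path_edges g') e) \<le> (s - s')"
      using c' le by (simp add: mult_left_le)
    ultimately show "passage_time (w(e:=s')) g \<le> passage_time (w(e:=s')) g'"
      using T[of s'] cg by (simp add: algebra_simps)
  next
    fix g' assume g': "g' \<in> {g. sa_path_from_to 0 x g}"
      and eq: "passage_time (w(e:=s')) g' = passage_time (w(e:=s')) g"
    have c': "count_list (path_edges g') e = 0 \<or> count_list (path_edges g') e = 1"
      using c[of g'] g' by auto
    have m': "passage_time ?w0 g + s \<le> passage_time ?w0 g' + s * real (count_list (path_edges g') e)"
      using m[of g'] g' T[of s] cg by simp
    have eq2: "passage_time ?w0 g' + s' * real (count_list (path_edges g') e) = passage_time ?w0 g + s'"
      using eq T[of s'] cg by simp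
    have "passage_time (w(e:=s)) g' = passage_time (w(e:=s)) g"
      using c'
    proof
      assume "count_list (path_edges g') e = 0"
      then show ?thesis using eq2 m' le T[of s] cg by simp
    next
      assume "count_list (path_edges g') e = 1"
      then show ?thesis using eq2 T[of s] cg by simp
    qed
    then show "ord g \<le> ord g'" using o g' by auto
  qed (use g in auto)
qed


lemma sum_meas:
  assumes "\<And>f. f \<in> lattice_edges \<Longrightarrow> (\<lambda>n. W n f) \<in> borel_measurable N"
  shows "set xs \<subseteq> lattice_edges \<Longrightarrow> (\<lambda>n. sum_list (map (W n) xs) :: real) \<in> borel_measurable N"
  using assms by (induction xs) auto

lemma Qp_meas:
  assumes W: "\<And>f. f \<in> lattice_edges \<Longrightarrow> (\<lambda>n. W n f) \<in> borel_measurable N"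
  shows "{n \<in> space N. Qp ord x e (W n)} \<in> sets N"
proof -
  have pt: "(\<lambda>n. passage_time (W n) g) \<in> borel_measurable N" if "g \<in> {g. sa_path_from_to 0 x g}" for g
    unfolding passage_time_def
    by (rule sum_meas[OF W]) (use that path_edges_in in \<open>auto simp: sa_path_from_to_def\<close>)
  have "Measurable.pred N (\<lambda>n. Qp ord x e (W n))"
    unfolding Qp_def
    apply (intro pred_intros_countable_bounded pred_intros_logic measurable_const)
    apply (unfold pred_def)
    apply simp
    apply (rule borel_measurable_le; rule pt; assumption)
    apply (rule borel_measurable_eq; rule pt; assumption)
    apply simp
    done
  then show ?thesis unfolding pred_def .
qed


lemma Qp_cong:
  assumes "\<And>f. f \<in> lattice_edges \<Longrightarrow> w1 f = w2 f"
  shows "Qp ord x e w1 = Qp ord x e w2"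
proof -
  have "passage_time w1 g = passage_time w2 g" if "sa_path_from_to 0 x g" for g
    unfolding passage_time_def
    by (rule arg_cong[where f=sum_list], rule map_cong[OF refl], rule assms)
       (use that path_edges_in in \<open>auto simp: sa_path_from_to_def\<close>)
  then show ?thesis unfolding Qp_def by (metis (mono_tags, lifting) mem_Collect_eq)
qed

theorem lemma2p1:
  fixes M :: "'w measure"
    and \<tau> :: "(int ^ 'd::finite) set \<Rightarrow> 'w \<Rightarrow> real"
    and \<mu> :: "real measure"
    and ord_rk :: "(int ^ 'd) list \<Rightarrow> nat"
    and x :: "int ^ 'd" and e :: "(int ^ 'd) set" and t :: real
  assumes dim: "CARD('d) \<ge> 2"
    and M: "prob_space M"
    and mu: "prob_space \<mu>" "sets \<mu> = sets borel"
    and indep: "prob_space.indep_vars M (\<lambda>_. borel) \<tau> lattice_edges"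
    and law: "\<forall>f \<in> lattice_edges. distr M borel (\<tau> f) = \<mu>"
    and nonneg: "\<forall>f \<in> lattice_edges. \<forall>\<omega> \<in> space M. 0 \<le> \<tau> f \<omega>"
    and standing: "(ess_inf_law \<mu> = 0 \<longrightarrow> distr_fun \<mu> (ess_inf_law \<mu>) < p_c TYPE('d))
                 \<and> (ess_inf_law \<mu> > 0 \<longrightarrow> distr_fun \<mu> (ess_inf_law \<mu>) < vec_p_c TYPE('d))"
    and ord_rk: "inj_on ord_rk {vs. sa_path vs}"
    and e: "e \<in> lattice_edges"
    and t: "t > 0"
  shows "measure M {\<omega> \<in> space M. \<tau> e \<omega> \<le> t \<and> edge_in_first_geodesic ord_rk (\<lambda>f. \<tau> f \<omega>) x e}
         \<ge> measure M {\<omega> \<in> space M. \<tau> e \<omega> \<le> t}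
           * measure M {\<omega> \<in> space M. edge_in_first_geodesic ord_rk (\<lambda>f. \<tau> f \<omega>) x e}"
proof -
  interpret P: prob_space M by (rule M)
  have meas: "\<And>f. f \<in> lattice_edges \<Longrightarrow> \<tau> f \<in> borel_measurable M"
    using indep unfolding P.indep_vars_def by auto
  define B where "B = {\<omega> \<in> space M. \<tau> e \<omega> \<le> t}"
  define A where "A = {\<omega> \<in> space M. edge_in_first_geodesic ord_rk (\<lambda>f. \<tau> f \<omega>) x e}"
  define B0 where "B0 = lattice_edges - {e}"
  define Y where "Y \<omega> = restrict (\<lambda>f. \<tau> f \<omega>) B0" for \<omega>
  define Xe where "Xe \<omega> = restrict (\<lambda>f. \<tau> f \<omega>) {e}" for \<omega>
  define Wt where "Wt y = (\<lambda>f. if f = e then t else y f)" for y :: "(int ^ 'd) set \<Rightarrow> real"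
  define S where "S = {y \<in> space (PiM B0 (\<lambda>_. borel)). Qp ord_rk x e (Wt y)}"
  define Xa where "Xa = {y \<in> space (PiM {e} (\<lambda>_. borel)). y e \<le> t}"
  define C where "C = Y -` S \<inter> space M"
  have A_char: "\<omega> \<in> A \<longleftrightarrow> \<omega> \<in> space M \<and> Qp ord_rk x e ((\<lambda>f. \<tau> f \<omega>)(e := \<tau> e \<omega>))" for \<omega>
  proof -
    have u: "(\<lambda>f. \<tau> f \<omega>)(e := \<tau> e \<omega>) = (\<lambda>f. \<tau> f \<omega>)" by (rule ext) simp
    show ?thesis unfolding u
      using Qp_equiv[of "\<lambda>f. \<tau> f \<omega>" ord_rk x e] nonneg by (auto simp: A_def)
  qed
  have C_char: "\<omega> \<in> C \<longleftrightarrow> \<omega> \<in> space M \<and> Qp ord_rk x e ((\<lambda>f. \<tau> f \<omega>)(e := t))" for \<omega>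
  proof -
    have "Qp ord_rk x e (Wt (Y \<omega>)) = Qp ord_rk x e ((\<lambda>f. \<tau> f \<omega>)(e := t))"
      by (rule Qp_cong) (auto simp: Wt_def Y_def B0_def)
    moreover have "Y \<omega> \<in> space (PiM B0 (\<lambda>_. borel))"
      by (auto simp: Y_def space_PiM)
    ultimately show ?thesis by (auto simp: C_def S_def)
  qed
  have ind2: "P.indep_var (PiM {e} (\<lambda>_. borel)) Xe (PiM B0 (\<lambda>_. borel)) Y"
    unfolding Xe_def Y_def B0_def by (rule P.indep_var_restrict[OF indep]) (use e in auto)
  have S_sets: "S \<in> sets (PiM B0 (\<lambda>_. borel))" unfolding S_def
  proof (rule Qp_meas)
    fix f :: "(int ^ 'd) set" assume f: "f \<in> lattice_edges"
    show "(\<lambda>y. Wt y f) \<in> borel_measurable (PiM B0 (\<lambda>_. borel))"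
    proof (cases "f = e")
      case True then show ?thesis by (simp add: Wt_def)
    next
      case False then show ?thesis using f
        by (simp add: Wt_def) (rule measurable_component_singleton, simp add: B0_def)
    qed
  qed
  have Xa_sets: "Xa \<in> sets (PiM {e} (\<lambda>_. borel))" unfolding Xa_def
    by (rule borel_measurable_le) (auto intro: measurable_component_singleton)
  have BC: "(\<lambda>\<omega>. (Xe \<omega>, Y \<omega>)) -` (Xa \<times> S) \<inter> space M = B \<inter> C"
    by (auto simp: B_def C_def Xa_def Xe_def space_PiM)
  have Bp: "Xe -` Xa \<inter> space M = B"
    by (auto simp: B_def Xa_def Xe_def space_PiM)
  have indBC: "P.prob (B \<inter> C) = P.prob B * P.prob C"
    using P.indep_varD[OF ind2 Xa_sets S_sets] BC Bp C_def by simp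
  have B_sets: "B \<in> sets M" unfolding B_def
    by (rule borel_measurable_le) (auto intro: meas e)
  have C_sets: "C \<in> sets M" unfolding C_def
    by (rule measurable_sets[OF P.indep_var_rv2[OF ind2] S_sets])
  have A_sets: "A \<in> sets M"
  proof -
    have "A = {\<omega> \<in> space M. Qp ord_rk x e (\<lambda>f. \<tau> f \<omega>)}"
    proof (rule set_eqI)
      fix \<omega>
      have u: "(\<lambda>f. \<tau> f \<omega>)(e := \<tau> e \<omega>) = (\<lambda>f. \<tau> f \<omega>)" by (rule ext) simp
      show "\<omega> \<in> A \<longleftrightarrow> \<omega> \<in> {\<omega> \<in> space M. Qp ord_rk x e (\<lambda>f. \<tau> f \<omega>)}"
        using A_char[of \<omega>] unfolding u by simp
    qed
    also have "\<dots> \<in> sets M" by (rule Qp_meas) (rule meas)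
    finally show ?thesis .
  qed
  have split1: "B \<inter> A = (B \<inter> C) \<union> (A - C)"
  proof (intro equalityI subsetI)
    fix \<omega> assume "\<omega> \<in> B \<inter> A" then show "\<omega> \<in> (B \<inter> C) \<union> (A - C)" by auto
  next
    fix \<omega> assume h: "\<omega> \<in> (B \<inter> C) \<union> (A - C)"
    show "\<omega> \<in> B \<inter> A"
    proof (cases "\<omega> \<in> C")
      case True
      then have "\<omega> \<in> B" using h by auto
      then have le: "\<tau> e \<omega> \<le> t" and "\<omega> \<in> space M" by (auto simp: B_def)
      have qq: "Qp ord_rk x e ((\<lambda>f. \<tau> f \<omega>)(e := t))" using True C_char by auto
      from le qq have "Qp ord_rk x e ((\<lambda>f. \<tau> f \<omega>)(e := \<tau> e \<omega>))" by (rule Qp_mono)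
      then show ?thesis using \<open>\<omega> \<in> B\<close> \<open>\<omega> \<in> space M\<close> A_char by auto
    next
      case False
      then have hA: "\<omega> \<in> A" using h by auto
      then have sp: "\<omega> \<in> space M" and q: "Qp ord_rk x e ((\<lambda>f. \<tau> f \<omega>)(e := \<tau> e \<omega>))" using A_char by auto
      have "\<tau> e \<omega> \<le> t"
      proof (rule ccontr)
        assume "\<not> \<tau> e \<omega> \<le> t"
        then have "t \<le> \<tau> e \<omega>" by simp
        from this q have "Qp ord_rk x e ((\<lambda>f. \<tau> f \<omega>)(e := t))" by (rule Qp_mono)
        then show False using False C_char sp by auto
      qed
      then show ?thesis using hA sp by (auto simp: B_def)
    qed
  qed
  have p1: "P.prob (B \<inter> A) = P.prob (B \<inter> C) + P.prob (A - C)"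
    unfolding split1 by (rule P.finite_measure_Union) (use B_sets C_sets A_sets in auto)
  have "A = (A \<inter> C) \<union> (A - C)" by auto
  then have p2: "P.prob A = P.prob (A \<inter> C) + P.prob (A - C)"
    by (metis P.finite_measure_Union A_sets C_sets Diff_disjoint Int_Diff_disjoint sets.Diff sets.Int)
  have p3: "P.prob (A \<inter> C) \<le> P.prob C" by (rule P.finite_measure_mono) (use C_sets in auto)
  have pB: "0 \<le> P.prob B" "P.prob B \<le> 1" by auto
  have pAC: "0 \<le> P.prob (A - C)" by simp
  have "P.prob B * P.prob A = P.prob B * P.prob (A \<inter> C) + P.prob B * P.prob (A - C)"
    using p2 by (simp add: algebra_simps)
  also have "\<dots> \<le> P.prob B * P.prob C + P.prob (A - C)"
    by (intro add_mono mult_left_mono p3 pB mult_left_le_one_le pAC)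
  also have "\<dots> = P.prob (B \<inter> A)" using p1 indBC by simp
  finally have main: "P.prob B * P.prob A \<le> P.prob (B \<inter> A)" .
  have "B \<inter> A = {\<omega> \<in> space M. \<tau> e \<omega> \<le> t \<and> edge_in_first_geodesic ord_rk (\<lambda>f. \<tau> f \<omega>) x e}"
    by (auto simp: A_def B_def)
  then show ?thesis using main by (simp add: A_def B_def)
qed

end
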